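(* Let $\tau_1(\mathbf X)$ be the lifetime of a coherent system whose component lifetimes $X_1,\dots,X_n$ are (possibly dependent) identically distributed as $X$, with domination function $h_1$, i.e. $\bar F_{\tau_1(\mathbf X)}(x)=h_1(\bar F_X(x))$; and let $\tau_2(\mathbf Y)$ be the lifetime of a coherent system whose component lifetimes $Y_1,\dots,Y_m$ are identically distributed as $Y$, with domination function $h_2$, i.e. $\bar F_{\tau_2(\mathbf Y)}(x)=h_2(\bar F_Y(x))$. For $p\in(0,1)$ set $R_i(p)=(1-p)h_i'(p)/(1-h_i(p))$, $i=1,2$. Suppose that (i) $R_1(p)$ and $R_1(p)/R_2(p)$ are increasing in $p\in(0,1)$; (ii) $pR_1'(p)/R_1(p)$ or $pR_2'(p)/R_2(p)$ is decreasing in $p\in(0,1)$; (iii) $X\underset{b}{\prec}Y$ and $X\le_{hr}Y$. Then $\tau_1(\mathbf X)\underset{b}{\prec}\tau_2(\mathbf Y)$.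
   Context: All random variables are non-negative and absolutely continuous with support $[0,\infty)$. For a random variable $W$: density $f_W$, cdf $F_W$, survival $\bar F_W=1-F_W$, hazard rate $r_W=f_W/\bar F_W$, reversed hazard rate $\tilde r_W=f_W/F_W$. $X\le_{hr}Y$ means $\bar F_Y(x)/\bar F_X(x)$ is increasing in $x$. $X\underset{b}{\prec}Y$ ($X$ ages faster than $Y$ in reversed failure rate) means $\tilde r_X(x)/\tilde r_Y(x)$ is decreasing in $x\ge0$. For a coherent system with identically distributed (possibly dependent) components with common distribution that of $X$, the system reliability is $h(\bar F_X(x))$ for a domination function $h:[0,1]\to[0,1]$ (depending on structure and survival copula), increasing, continuous, $h(0)=0$, $h(1)=1$, assumed differentiable as needed. "Increasing" means non-decreasing, "decreasing" means non-increasing. *)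

theory Defs
  imports "HOL-Analysis.Analysis"
begin

definition lifetime_dist :: "(real \<Rightarrow> real) \<Rightarrow> (real \<Rightarrow> real) \<Rightarrow> bool" where
  "lifetime_dist F f \<longleftrightarrow>
     (\<forall>x\<le>0. F x = 0) \<and> (\<forall>x>0. 0 < F x \<and> F x < 1) \<and> continuous_on UNIV F \<and>
     (\<forall>x>0. (F has_real_derivative f x) (at x)) \<and> (\<forall>x. 0 \<le> f x) \<and>
     (F \<longlongrightarrow> 1) at_top"

definition survival :: "(real \<Rightarrow> real) \<Rightarrow> real \<Rightarrow> real" where
  "survival F x = 1 - F x"

definition hazard_rate :: "(real \<Rightarrow> real) \<Rightarrow> (real \<Rightarrow> real) \<Rightarrow> real \<Rightarrow> real" where
  "hazard_rate F f x = f x / survival F x"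

definition rev_hazard_rate :: "(real \<Rightarrow> real) \<Rightarrow> (real \<Rightarrow> real) \<Rightarrow> real \<Rightarrow> real" where
  "rev_hazard_rate F f x = f x / F x"

definition hr_order :: "(real \<Rightarrow> real) \<Rightarrow> (real \<Rightarrow> real) \<Rightarrow> bool" where
  "hr_order FX FY \<longleftrightarrow> mono_on {0..} (\<lambda>x. survival FY x / survival FX x)"

text \<open>X ages faster than Y in reversed failure rate: rhr_X / rhr_Y decreasing
 (on x > 0, where the reversed hazard rates are defined).\<close>
definition ages_faster_rfr ::
  "(real \<Rightarrow> real) \<Rightarrow> (real \<Rightarrow> real) \<Rightarrow> (real \<Rightarrow> real) \<Rightarrow> (real \<Rightarrow> real) \<Rightarrow> bool" where
  "ages_faster_rfr FX fX FY fY \<longleftrightarrow>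
     antimono_on {0<..} (\<lambda>x. rev_hazard_rate FX fX x / rev_hazard_rate FY fY x)"

definition domination_fun :: "(real \<Rightarrow> real) \<Rightarrow> bool" where
  "domination_fun h \<longleftrightarrow> mono_on {0..1} h \<and> continuous_on {0..1} h \<and> h 0 = 0 \<and> h 1 = 1
     \<and> h ` {0..1} \<subseteq> {0..1}"

end

theory Submission
  imports Defs
begin

lemma decr_lemma:
  fixes f f' :: "real \<Rightarrow> real"
  assumes "a \<le> b" and "\<And>x. a \<le> x \<Longrightarrow> x \<le> b \<Longrightarrow> DERIV f x :> f' x \<and> f' x \<le> 0"
  shows "f b \<le> f a"
proof (rule DERIV_nonpos_imp_decreasing_open[OF assms(1)])
  fix x assume "a < x" "x < b"
  then show "\<exists>y. DERIV f x :> y \<and> y \<le> 0"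
    using assms(2)[of x] by auto
next
  show "continuous_on {a..b} f"
    by (rule continuous_at_imp_continuous_on) (use assms(2) DERIV_isCont in force)
qed

lemma incr_lemma:
  fixes f f' :: "real \<Rightarrow> real"
  assumes "a \<le> b" and "\<And>x. a \<le> x \<Longrightarrow> x \<le> b \<Longrightarrow> DERIV f x :> f' x \<and> f' x \<ge> 0"
  shows "f a \<le> f b"
proof (rule DERIV_nonneg_imp_increasing_open[OF assms(1)])
  fix x assume "a < x" "x < b"
  then show "\<exists>y. DERIV f x :> y \<and> y \<ge> 0"
    using assms(2)[of x] by auto
next
  show "continuous_on {a..b} f"
    by (rule continuous_at_imp_continuous_on) (use assms(2) DERIV_isCont in force)
qed

lemma deriv_nonneg_open:
  fixes f :: "real \<Rightarrow> real"
  assumes "mono_on {a<..<b} f" "a < x" "x < b" "DERIV f x :> D"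
  shows "0 \<le> D"
  by (rule mono_on_imp_deriv_nonneg[OF assms(1) assms(4)]) (use assms in auto)

lemma ld_facts:
  assumes "lifetime_dist F f" "x > 0"
  shows "0 < F x" "F x < 1" "DERIV F x :> f x" "0 \<le> f x"
  using assms unfolding lifetime_dist_def by auto

lemma ld_F0: "lifetime_dist F f \<Longrightarrow> F 0 = 0"
  unfolding lifetime_dist_def by auto

lemma ld_mono:
  assumes "lifetime_dist F f" "0 < a" "a \<le> b"
  shows "F a \<le> F b"
  by (rule incr_lemma[where f'=f, OF assms(3)]) (use ld_facts[OF assms(1)] assms in force)

lemma dom_facts:
  assumes "domination_fun h" "\<And>p. 0 < p \<Longrightarrow> p < 1 \<Longrightarrow> (h has_real_derivative dh p) (at p)"
    "0 < p" "p < 1"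
  shows "0 \<le> dh p" "h p \<le> 1"
proof -
  have "mono_on {0<..<1} h" using assms(1) unfolding domination_fun_def
    by (meson greaterThanLessThan_subseteq_atLeastAtMost_iff mono_on_subset order_refl)
  then show "0 \<le> dh p" using deriv_nonneg_open assms by blast
  have "p \<in> {0..1}" using assms by auto
  then have "h p \<in> {0..1}" using assms(1) unfolding domination_fun_def by blast
  then show "h p \<le> 1" by simp
qed

lemma chain_f:
  assumes X: "lifetime_dist FX fX" and T1: "lifetime_dist F1 f1"
    and T1h: "\<And>x. survival F1 x = h1 (survival FX x)"
    and dh1: "\<And>p. 0 < p \<Longrightarrow> p < 1 \<Longrightarrow> (h1 has_real_derivative dh1 p) (at p)"
    and x: "x > 0"
  shows "f1 x = dh1 (1 - FX x) * fX x"
proof -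
  have F1eq: "F1 = (\<lambda>x. 1 - h1 (1 - FX x))"
  proof (rule ext)
    fix y
    have "1 - F1 y = h1 (1 - FX y)" using T1h[of y] unfolding survival_def .
    then show "F1 y = 1 - h1 (1 - FX y)" by linarith
  qed
  have d0: "DERIV (\<lambda>x. 1 - FX x) x :> 0 - fX x"
    by (rule DERIV_diff[OF DERIV_const ld_facts(3)[OF X x]])
  have d1: "DERIV (\<lambda>x. 1 - FX x) x :> - fX x"
    using d0 by simp
  have "DERIV h1 (1 - FX x) :> dh1 (1 - FX x)"
    using dh1 ld_facts(1,2)[OF X x] by simp
  from DERIV_chain2[OF this d1]
  have "DERIV (\<lambda>x. h1 (1 - FX x)) x :> dh1 (1 - FX x) * - fX x" .
  then have "DERIV (\<lambda>x. 1 - h1 (1 - FX x)) x :> 0 - (dh1 (1 - FX x) * - fX x)"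
    by (rule DERIV_diff[OF DERIV_const])
  moreover have "0 - (dh1 (1 - FX x) * - fX x) = dh1 (1 - FX x) * fX x" by simp
  ultimately have "DERIV F1 x :> dh1 (1 - FX x) * fX x" unfolding F1eq by simp
  then show ?thesis using DERIV_unique ld_facts(3)[OF T1 x] by blast
qed

lemma rhr_eq:
  assumes X: "lifetime_dist FX fX" and T1: "lifetime_dist F1 f1"
    and T1h: "\<And>x. survival F1 x = h1 (survival FX x)"
    and dh1: "\<And>p. 0 < p \<Longrightarrow> p < 1 \<Longrightarrow> (h1 has_real_derivative dh1 p) (at p)"
    and R1_def: "\<And>p. R1 p = (1 - p) * dh1 p / (1 - h1 p)"
    and x: "x > 0"
  shows "rev_hazard_rate F1 f1 x = R1 (survival FX x) * rev_hazard_rate FX fX x"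
proof -
  have F1x: "F1 x = 1 - h1 (1 - FX x)"
    using T1h[of x] unfolding survival_def by linarith
  have ne: "FX x \<noteq> 0" using ld_facts(1)[OF X x] by simp
  have cf: "f1 x = dh1 (1 - FX x) * fX x" by (rule chain_f[OF X T1 T1h dh1 x])
  define c where "c = 1 - h1 (1 - FX x)"
  have "rev_hazard_rate F1 f1 x = dh1 (1 - FX x) * fX x / c"
    unfolding rev_hazard_rate_def F1x cf c_def ..
  also have "\<dots> = (FX x * (dh1 (1 - FX x) * fX x)) / (FX x * c)"
    using ne by (rule mult_divide_mult_cancel_left[symmetric])
  also have "\<dots> = ((1 - (1 - FX x)) * dh1 (1 - FX x) / c) * (fX x / FX x)"
    by (simp add: times_divide_times_eq mult.commute mult.left_commute)
  also have "\<dots> = R1 (survival FX x) * rev_hazard_rate FX fX x"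
    unfolding rev_hazard_rate_def R1_def survival_def c_def ..
  finally show ?thesis .
qed


lemma nonneg_div:
  fixes N D :: real
  assumes "0 \<le> N / D" "0 < D"
  shows "0 \<le> N"
proof -
  have "0 \<le> N / D * D" by (rule mult_nonneg_nonneg) (use assms in auto)
  also have "N / D * D = N" using assms by simp
  finally show ?thesis .
qed

lemma R_nonneg:
  assumes h: "domination_fun h" and dh: "\<And>p. 0 < p \<Longrightarrow> p < 1 \<Longrightarrow> (h has_real_derivative dh p) (at p)"
    and Rd: "\<And>p. R p = (1 - p) * dh p / (1 - h p)" and p: "0 < p" "p < 1"
  shows "0 \<le> R p"
proof -
  have "0 \<le> dh p" "h p \<le> 1" using dom_facts[OF h dh p] by auto
  then show ?thesis unfolding Rd using p by (simp add: divide_nonneg_nonneg)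
qed

lemma zero_prop:
  fixes R :: "real \<Rightarrow> real"
  assumes nn: "\<And>p. 0 < p \<Longrightarrow> p < 1 \<Longrightarrow> 0 \<le> R p"
    and dR: "\<And>p. 0 < p \<Longrightarrow> p < 1 \<Longrightarrow> DERIV R p :> deriv R p"
    and am: "antimono_on {0<..<1} (\<lambda>p. p * deriv R p / R p)"
    and pq: "0 < p" "p \<le> q" "q < 1" and Rq: "R q > 0"
  shows "R p > 0"
proof (rule ccontr)
  assume "\<not> R p > 0"
  then have Rp: "R p = 0" using nn[of p] pq by auto
  have "\<forall>r. p \<le> r \<and> r \<le> q \<longrightarrow> DERIV R r :> deriv R r \<and> deriv R r \<le> 0"
  proof (intro allI impI)
    fix r assume r: "p \<le> r \<and> r \<le> q"
    then have r01: "0 < r" "r < 1" using pq by auto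
    have D: "DERIV R r :> deriv R r" using dR r01 by auto
    have "deriv R r \<le> 0"
    proof (cases "R r = 0")
      case True
      have "deriv R r = 0"
      proof (rule DERIV_local_min[OF D])
        show "0 < min r (1 - r)" using r01 by auto
        show "\<forall>y. \<bar>r - y\<bar> < min r (1 - r) \<longrightarrow> R r \<le> R y"
          using True nn by (auto simp: abs_less_iff)
      qed
      then show ?thesis by simp
    next
      case False
      then have Rr: "R r > 0" using nn[OF r01] by auto
      have "r * deriv R r / R r \<le> p * deriv R p / R p"
        using am r pq r01 unfolding monotone_on_def by auto
      then have "r * deriv R r / R r \<le> 0" using Rp by simp
      then have "r * deriv R r \<le> 0" using Rr by (simp add: divide_le_0_iff)
      then show ?thesis using r01 by (simp add: mult_le_0_iff)
    qed
    then show "DERIV R r :> deriv R r \<and> deriv R r \<le> 0" using D by simp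
  qed
  then have "R q \<le> R p" using decr_lemma[of p q R "deriv R"] pq by blast
  then show False using Rp Rq by simp
qed

lemma key_ineq:
  fixes a b u v fX fY :: real
  assumes "0 \<le> a" "v * b \<le> u * a" "fY * u \<le> fX * v" "0 \<le> fX" "0 \<le> fY" "0 < u" "0 < v"
  shows "b * fY \<le> a * fX"
proof (cases "b \<le> 0")
  case True
  then have "b * fY \<le> 0" using assms by (simp add: mult_nonpos_nonneg)
  also have "0 \<le> a * fX" using assms by simp
  finally show ?thesis .
next
  case False
  have "u * (b * fY) = b * (fY * u)" by simp
  also have "\<dots> \<le> b * (fX * v)" using False assms by (intro mult_left_mono) auto
  also have "\<dots> = fX * (v * b)" by simp
  also have "\<dots> \<le> fX * (u * a)" using assms by (intro mult_left_mono) auto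
  also have "\<dots> = u * (a * fX)" by simp
  finally show ?thesis using assms by simp
qed

theorem theorem3p2:
  fixes FX fX FY fY F1 f1 F2 f2 h1 dh1 h2 dh2 :: "real \<Rightarrow> real"
    and R1 R2 :: "real \<Rightarrow> real"
  assumes X: "lifetime_dist FX fX" and Y: "lifetime_dist FY fY"
    and h1: "domination_fun h1" and h2: "domination_fun h2"
    and dh1: "\<And>p. 0 < p \<Longrightarrow> p < 1 \<Longrightarrow> (h1 has_real_derivative dh1 p) (at p)"
    and dh2: "\<And>p. 0 < p \<Longrightarrow> p < 1 \<Longrightarrow> (h2 has_real_derivative dh2 p) (at p)"
    and T1: "lifetime_dist F1 f1" and T1h: "\<And>x. survival F1 x = h1 (survival FX x)"
    and T2: "lifetime_dist F2 f2" and T2h: "\<And>x. survival F2 x = h2 (survival FY x)"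
    and R1_def: "\<And>p. R1 p = (1 - p) * dh1 p / (1 - h1 p)"
    and R2_def: "\<And>p. R2 p = (1 - p) * dh2 p / (1 - h2 p)"
    and R1_diff: "\<And>p. 0 < p \<Longrightarrow> p < 1 \<Longrightarrow> R1 differentiable (at p)"
    and R2_diff: "\<And>p. 0 < p \<Longrightarrow> p < 1 \<Longrightarrow> R2 differentiable (at p)"
    and i1: "mono_on {0<..<1} R1"
    and i2: "mono_on {0<..<1} (\<lambda>p. R1 p / R2 p)"
    and ii: "antimono_on {0<..<1} (\<lambda>p. p * deriv R1 p / R1 p)
          \<or> antimono_on {0<..<1} (\<lambda>p. p * deriv R2 p / R2 p)"
    and iii1: "ages_faster_rfr FX fX FY fY"
    and iii2: "hr_order FX FY"
  shows "ages_faster_rfr F1 f1 F2 f2"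
proof -
  define u where "u = (\<lambda>x. survival FX x)"
  define v where "v = (\<lambda>x. survival FY x)"
  have u_eq: "\<And>x. u x = 1 - FX x" by (simp add: u_def survival_def)
  have v_eq: "\<And>x. v x = 1 - FY x" by (simp add: v_def survival_def)
  have u01: "\<And>x. 0 < x \<Longrightarrow> 0 < u x \<and> u x < 1" using ld_facts(1,2)[OF X] u_eq by auto
  have v01: "\<And>x. 0 < x \<Longrightarrow> 0 < v x \<and> v x < 1" using ld_facts(1,2)[OF Y] v_eq by auto
  have du: "\<And>x. 0 < x \<Longrightarrow> DERIV u x :> - fX x"
    unfolding u_eq[abs_def] using ld_facts(3)[OF X] by (auto intro!: derivative_eq_intros)
  have dv: "\<And>x. 0 < x \<Longrightarrow> DERIV v x :> - fY x"
    unfolding v_eq[abs_def] using ld_facts(3)[OF Y] by (auto intro!: derivative_eq_intros)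
  have fXnn: "\<And>x. 0 < x \<Longrightarrow> 0 \<le> fX x" using ld_facts(4)[OF X] by auto
  have fYnn: "\<And>x. 0 < x \<Longrightarrow> 0 \<le> fY x" using ld_facts(4)[OF Y] by auto
  have R1nn: "\<And>p. 0 < p \<Longrightarrow> p < 1 \<Longrightarrow> 0 \<le> R1 p" using R_nonneg[OF h1 dh1 R1_def] by auto
  have R2nn: "\<And>p. 0 < p \<Longrightarrow> p < 1 \<Longrightarrow> 0 \<le> R2 p" using R_nonneg[OF h2 dh2 R2_def] by auto
  have dR1: "\<And>p. 0 < p \<Longrightarrow> p < 1 \<Longrightarrow> DERIV R1 p :> deriv R1 p"
    using R1_diff DERIV_deriv_iff_real_differentiable by blast
  have dR2: "\<And>p. 0 < p \<Longrightarrow> p < 1 \<Longrightarrow> DERIV R2 p :> deriv R2 p"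
    using R2_diff DERIV_deriv_iff_real_differentiable by blast
  have dR1nn: "\<And>p. 0 < p \<Longrightarrow> p < 1 \<Longrightarrow> 0 \<le> deriv R1 p"
    using deriv_nonneg_open[OF i1] dR1 by blast
  have K: "deriv R2 p / R2 p \<le> deriv R1 p / R1 p"
    if p: "0 < p" "p < 1" and pos: "R1 p > 0" "R2 p > 0" for p
  proof -
    have "DERIV (\<lambda>p. R1 p / R2 p) p :> (deriv R1 p * R2 p - R1 p * deriv R2 p) / (R2 p * R2 p)"
      by (rule DERIV_divide[OF dR1[OF p] dR2[OF p]]) (use pos in auto)
    then have "0 \<le> (deriv R1 p * R2 p - R1 p * deriv R2 p) / (R2 p * R2 p)"
      using deriv_nonneg_open[OF i2] p by blast
    then have "0 \<le> (deriv R1 p * R2 p - R1 p * deriv R2 p) / (R2 p * R2 p) * (R2 p * R2 p)"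
      by (rule mult_nonneg_nonneg) simp
    moreover have "(deriv R1 p * R2 p - R1 p * deriv R2 p) / (R2 p * R2 p) * (R2 p * R2 p)
        = deriv R1 p * R2 p - R1 p * deriv R2 p"
      using pos by simp
    ultimately have "0 \<le> deriv R1 p * R2 p - R1 p * deriv R2 p" by simp
    then have le: "R1 p * deriv R2 p \<le> deriv R1 p * R2 p" by simp
    have e1: "deriv R2 p / R2 p = (R1 p * deriv R2 p) / (R1 p * R2 p)" using pos by simp
    have e2: "deriv R1 p / R1 p = (deriv R1 p * R2 p) / (R1 p * R2 p)" using pos by simp
    have "(R1 p * deriv R2 p) / (R1 p * R2 p) \<le> (deriv R1 p * R2 p) / (R1 p * R2 p)"
      by (rule divide_right_mono[OF le]) (use pos in simp)
    then show ?thesis unfolding e1 e2 .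
  qed
  have hr1: "u x \<le> v x" if x: "0 < x" for x
  proof -
    have "(\<lambda>x. survival FY x / survival FX x) 0 \<le> (\<lambda>x. survival FY x / survival FX x) x"
      using iii2 x unfolding hr_order_def monotone_on_def by auto
    moreover have "FX 0 = 0" "FY 0 = 0" using ld_F0 X Y by auto
    ultimately have "1 \<le> v x / u x" unfolding u_def v_def survival_def by simp
    then show ?thesis using u01[OF x] by (simp add: le_divide_eq)
  qed
  have hr2: "fY x * u x \<le> fX x * v x" if x: "0 < x" for x
  proof -
    have ne: "u x \<noteq> 0" using u01[OF x] by simp
    have D: "DERIV (\<lambda>x. v x / u x) x :> (- fY x * u x - v x * - fX x) / (u x * u x)"
      by (rule DERIV_divide[OF dv[OF x] du[OF x] ne])
    have "mono_on {0<..<x+1} (\<lambda>x. v x / u x)"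
      using iii2 unfolding hr_order_def u_def v_def
      by (rule mono_on_subset) auto
    then have "0 \<le> (- fY x * u x - v x * - fX x) / (u x * u x)"
      using deriv_nonneg_open D x by fastforce
    then have "0 \<le> - fY x * u x - v x * - fX x"
      by (rule nonneg_div) (use u01[OF x] in simp)
    moreover have "v x * - fX x = - (fX x * v x)" by simp
    moreover have "- fY x * u x = - (fY x * u x)" by simp
    ultimately show ?thesis by linarith
  qed
  have AB: "v z * deriv R2 (v z) / R2 (v z) \<le> u z * deriv R1 (u z) / R1 (u z)"
    if z: "0 < z" and pos: "R1 (u z) > 0" "R2 (v z) > 0" for z
  proof -
    have uz: "0 < u z" "u z < 1" and vz: "0 < v z" "v z < 1" using u01 v01 z by auto
    have uv: "u z \<le> v z" using hr1 z by simp
    from ii show ?thesis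
    proof
      assume am: "antimono_on {0<..<1} (\<lambda>p. p * deriv R1 p / R1 p)"
      have R1v: "R1 (v z) > 0" using mono_onD[OF i1, of "u z" "v z"] uz vz uv pos by auto
      have "v z * deriv R2 (v z) / R2 (v z) = v z * (deriv R2 (v z) / R2 (v z))" by simp
      also have "\<dots> \<le> v z * (deriv R1 (v z) / R1 (v z))"
        using K[OF vz R1v pos(2)] vz by (intro mult_left_mono) auto
      also have "\<dots> = v z * deriv R1 (v z) / R1 (v z)" by simp
      also have "\<dots> \<le> u z * deriv R1 (u z) / R1 (u z)"
        using am uz vz uv unfolding monotone_on_def by auto
      finally show ?thesis .
    next
      assume am: "antimono_on {0<..<1} (\<lambda>p. p * deriv R2 p / R2 p)"
      have R2u: "R2 (u z) > 0"
        by (rule zero_prop[OF _ _ am, of "u z" "v z"]) (use R2nn dR2 uz vz uv pos in auto)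
      have "v z * deriv R2 (v z) / R2 (v z) \<le> u z * deriv R2 (u z) / R2 (u z)"
        using am uz vz uv unfolding monotone_on_def by auto
      also have "\<dots> = u z * (deriv R2 (u z) / R2 (u z))" by simp
      also have "\<dots> \<le> u z * (deriv R1 (u z) / R1 (u z))"
        using K[OF uz pos(1) R2u] uz by (intro mult_left_mono) auto
      also have "\<dots> = u z * deriv R1 (u z) / R1 (u z)" by simp
      finally show ?thesis .
    qed
  qed
  have DI: "R1 (u z) * (deriv R2 (v z) * fY z) \<le> deriv R1 (u z) * fX z * R2 (v z)"
    if z: "0 < z" and pos: "R1 (u z) > 0" "R2 (v z) > 0" for z
  proof -
    define a where "a = deriv R1 (u z) / R1 (u z)"
    define b where "b = deriv R2 (v z) / R2 (v z)"
    have "b * fY z \<le> a * fX z"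
    proof (rule key_ineq)
      show "0 \<le> a" unfolding a_def using dR1nn u01 z pos by simp
      show "v z * b \<le> u z * a" unfolding a_def b_def using AB[OF z pos] by simp
    qed (use hr2 fXnn fYnn u01 v01 z in auto)
    then have "R1 (u z) * R2 (v z) * (b * fY z) \<le> R1 (u z) * R2 (v z) * (a * fX z)"
      using pos by (intro mult_left_mono) auto
    moreover have "R1 (u z) * R2 (v z) * (b * fY z) = R1 (u z) * (deriv R2 (v z) * fY z)"
      unfolding b_def using pos by simp
    moreover have "R1 (u z) * R2 (v z) * (a * fX z) = deriv R1 (u z) * fX z * R2 (v z)"
      unfolding a_def using pos by simp
    ultimately show ?thesis by simp
  qed
  define g where "g = (\<lambda>z. R1 (u z) / R2 (v z))"
  have gnn: "\<And>z. 0 < z \<Longrightarrow> 0 \<le> g z"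
    unfolding g_def using R1nn R2nn u01 v01 by (simp add: divide_nonneg_nonneg)
  have gdec: "g y \<le> g x" if xy: "0 < x" "x \<le> y" and gy: "g y > 0" for x y
  proof -
    have y: "0 < y" using xy by simp
    have "R1 (u y) \<noteq> 0" "R2 (v y) \<noteq> 0" using gy unfolding g_def by auto
    then have R1uy: "R1 (u y) > 0" and R2vy: "R2 (v y) > 0"
      using R1nn R2nn u01[OF y] v01[OF y] by (auto simp: order_le_less)
    have pos: "R1 (u z) > 0 \<and> R2 (v z) > 0" if z: "x \<le> z" "z \<le> y" for z
    proof -
      have z0: "0 < z" using z xy by simp
      have "FX z \<le> FX y" "FY z \<le> FY y" using ld_mono[OF X z0 z(2)] ld_mono[OF Y z0 z(2)] by auto
      then have uy: "u y \<le> u z" and vy: "v y \<le> v z" using u_eq v_eq by auto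
      have a: "R1 (u y) \<le> R1 (u z)" using mono_onD[OF i1, of "u y" "u z"] u01 z0 y uy by auto
      have "u y \<le> v y" using hr1 y by simp
      then have "R1 (u y) \<le> R1 (v y)" using mono_onD[OF i1, of "u y" "v y"] u01 v01 y by auto
      also have "R1 (v y) \<le> R1 (v z)" using mono_onD[OF i1, of "v y" "v z"] v01 z0 y vy by auto
      finally have R1vz: "R1 (v z) > 0" using R1uy by simp
      have "0 < R1 (v y) / R2 (v y)"
        using R1uy R2vy \<open>R1 (u y) \<le> R1 (v y)\<close> by simp
      also have "\<dots> \<le> R1 (v z) / R2 (v z)"
        using mono_onD[OF i2, of "v y" "v z"] v01 z0 y vy by auto
      finally have "R2 (v z) \<noteq> 0" by auto
      then show ?thesis using a R1uy R2nn v01[OF z0] by (auto simp: order_le_less)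
    qed
    have "\<forall>z. x \<le> z \<and> z \<le> y \<longrightarrow> DERIV g z :>
       ((deriv R1 (u z) * - fX z) * R2 (v z) - R1 (u z) * (deriv R2 (v z) * - fY z)) / (R2 (v z) * R2 (v z))
       \<and> ((deriv R1 (u z) * - fX z) * R2 (v z) - R1 (u z) * (deriv R2 (v z) * - fY z)) / (R2 (v z) * R2 (v z)) \<le> 0"
    proof (intro allI impI conjI)
      fix z assume z: "x \<le> z \<and> z \<le> y"
      then have z0: "0 < z" using xy by simp
      have P: "R1 (u z) > 0" "R2 (v z) > 0" using pos z by auto
      have d1: "DERIV (\<lambda>z. R1 (u z)) z :> deriv R1 (u z) * - fX z"
        by (rule DERIV_chain2[OF dR1 du[OF z0]]) (use u01[OF z0] in auto)
      have d2: "DERIV (\<lambda>z. R2 (v z)) z :> deriv R2 (v z) * - fY z"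
        by (rule DERIV_chain2[OF dR2 dv[OF z0]]) (use v01[OF z0] in auto)
      show "DERIV g z :>
       ((deriv R1 (u z) * - fX z) * R2 (v z) - R1 (u z) * (deriv R2 (v z) * - fY z)) / (R2 (v z) * R2 (v z))"
        unfolding g_def by (rule DERIV_divide[OF d1 d2]) (use P in auto)
      have "(deriv R1 (u z) * - fX z) * R2 (v z) - R1 (u z) * (deriv R2 (v z) * - fY z)
         = R1 (u z) * (deriv R2 (v z) * fY z) - deriv R1 (u z) * fX z * R2 (v z)" by simp
      also have "\<dots> \<le> 0" using DI[OF z0 P] by simp
      finally show "((deriv R1 (u z) * - fX z) * R2 (v z) - R1 (u z) * (deriv R2 (v z) * - fY z)) / (R2 (v z) * R2 (v z)) \<le> 0"
        using P by (simp add: divide_nonpos_pos)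
    qed
    then show ?thesis
      by (intro decr_lemma[OF xy(2), where f'="\<lambda>z. ((deriv R1 (u z) * - fX z) * R2 (v z) - R1 (u z) * (deriv R2 (v z) * - fY z)) / (R2 (v z) * R2 (v z))"]) blast
  qed
  define Xr where "Xr = (\<lambda>z. rev_hazard_rate FX fX z / rev_hazard_rate FY fY z)"
  have Xrnn: "0 \<le> Xr z" if z: "0 < z" for z
  proof -
    have a: "0 \<le> rev_hazard_rate FX fX z" unfolding rev_hazard_rate_def
      using ld_facts(1,4)[OF X z] by simp
    have b: "0 \<le> rev_hazard_rate FY fY z" unfolding rev_hazard_rate_def
      using ld_facts(1,4)[OF Y z] by simp
    show ?thesis unfolding Xr_def using a b by (rule divide_nonneg_nonneg)
  qed
  have Xrdec: "\<And>x y. 0 < x \<Longrightarrow> x \<le> y \<Longrightarrow> Xr y \<le> Xr x"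
    using iii1 unfolding ages_faster_rfr_def monotone_on_def Xr_def by auto
  have T: "rev_hazard_rate F1 f1 z / rev_hazard_rate F2 f2 z = g z * Xr z" if z: "0 < z" for z
  proof -
    have e1: "rev_hazard_rate F1 f1 z = R1 (u z) * rev_hazard_rate FX fX z"
      using rhr_eq[OF X T1 T1h dh1 R1_def z] unfolding u_def .
    have e2: "rev_hazard_rate F2 f2 z = R2 (v z) * rev_hazard_rate FY fY z"
      using rhr_eq[OF Y T2 T2h dh2 R2_def z] unfolding v_def .
    show ?thesis unfolding e1 e2 g_def Xr_def by (rule times_divide_times_eq[symmetric])
  qed
  show ?thesis
    unfolding ages_faster_rfr_def monotone_on_def
  proof (intro ballI impI)
    fix x y :: real assume x: "x \<in> {0<..}" and y: "y \<in> {0<..}" and xy: "x \<le> y"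
    have x0: "0 < x" and y0: "0 < y" using x y by auto
    have gx: "0 \<le> g x" "0 \<le> Xr x" "0 \<le> g y" "0 \<le> Xr y" using gnn Xrnn x0 y0 by auto
    have "g y * Xr y \<le> g x * Xr x"
    proof (cases "g y = 0 \<or> Xr y = 0")
      case True
      then have e: "g y * Xr y = 0" by auto
      have "0 \<le> g x * Xr x" by (intro mult_nonneg_nonneg) (use gx in auto)
      then show ?thesis unfolding e .
    next
      case False
      then have "g y > 0" using gx by (auto simp: order_le_less)
      then have "g y \<le> g x" using gdec x0 xy by auto
      moreover have "Xr y \<le> Xr x" using Xrdec x0 xy by auto
      ultimately show ?thesis using gx by (intro mult_mono) auto
    qed
    then show "rev_hazard_rate F1 f1 y / rev_hazard_rate F2 f2 y \<le> rev_hazard_rate F1 f1 x / rev_hazard_rate F2 f2 x"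
      unfolding T[OF x0] T[OF y0] .
  qed
qed

end
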